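(* Let $G$ be an $n$-node graph of arboricity at most $a$ ($a\ge1$ an integer), let $k\ge 5a$, and let $C_1,C_2,\dots$ be the layers of the Decomposition procedure with parameters $b=2a$ and $k$. Let $E_1$ be the set of atypical edges. Suppose each node $u$ assigns to each edge of $E_1$ joining $u$ to a higher node a color in $\{1,\dots,2a\}$, distinct edges at $u$ receiving distinct colors (this is possible), and let $F_i\subseteq E_1$ be the set of edges with color $i$. Then for each $i\in\{1,\dots,2a\}$, the graph $G[F_i]$ is a forest in which every node has at most one higher neighbor. Moreover, if $c_i$ is any proper $3$-coloring of the nodes of $G[F_i]$ and $F_{i,j}=\{e\in F_i: c_i(\text{higher endpoint of } e)=j\}$ for $j\in\{1,2,3\}$, then every connected component of $G[F_{i,j}]$ is a star whose center is the highest node of the component.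
   Context: Decomposition procedure with parameters $b,k$ on a graph $G$: set $V_0=V(G)$; for $i=1,2,\dots$: let $C_i$ be the set of nodes $u\in V_{i-1}$ with $\deg_{G[V_{i-1}]}(u)\le k$ such that at most $b$ neighbors of $u$ in $G[V_{i-1}]$ have degree greater than $k$ in $G[V_{i-1}]$; set $V_i=V_{i-1}\setminus C_i$; continue until all nodes are in some layer. Node $u$ is lower than node $v$ (and $v$ higher than $u$) if $u$'s layer index is smaller, or they are in the same layer and $u$ has smaller ID; the higher endpoint of an edge is its higher node. An edge $e=\{u,v\}$ with $u\in C_i$, $v\in C_j$, $i<j$ is atypical if $\deg_{G[V_{i-1}]}(v)>k$; $E_1$ is the set of atypical edges. $G[F]$ denotes the graph with edge set $F$ and vertex set the endpoints of edges in $F$. *)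

theory Defs
  imports Main
begin

text \<open>Simple graphs: vertex set V, edge set E of 2-element subsets of V.
  Node IDs are given by a linear order on the vertex type.\<close>

definition simple_graph :: "'a set \<Rightarrow> 'a set set \<Rightarrow> bool" where
  "simple_graph V E \<longleftrightarrow> finite V \<and>
     (\<forall>e\<in>E. \<exists>u v. e = {u, v} \<and> u \<noteq> v \<and> u \<in> V \<and> v \<in> V)"

definition verts :: "'a set set \<Rightarrow> 'a set" where
  "verts F = \<Union>F"

definition forest :: "'a set set \<Rightarrow> bool" where
  "forest F \<longleftrightarrow> \<not> (\<exists>vs. length vs \<ge> 3 \<and> distinct vs \<and>
      (\<forall>i<length vs. {vs ! i, vs ! ((i + 1) mod length vs)} \<in> F))"

definition arboricity_le :: "'a set set \<Rightarrow> nat \<Rightarrow> bool" where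
  "arboricity_le E a \<longleftrightarrow> (\<exists>Fs. (\<forall>i<a. forest (Fs i)) \<and> E = (\<Union>i<a. Fs i))"

definition deg_in :: "'a set set \<Rightarrow> 'a set \<Rightarrow> 'a \<Rightarrow> nat" where
  "deg_in E W u = card {v \<in> W. {u, v} \<in> E}"

text \<open>Set C_i of nodes removed in round i, given V_{i-1} = W.\<close>
definition removed :: "'a set set \<Rightarrow> nat \<Rightarrow> nat \<Rightarrow> 'a set \<Rightarrow> 'a set" where
  "removed E b k W = {u \<in> W. deg_in E W u \<le> k \<and>
      card {v \<in> W. {u, v} \<in> E \<and> deg_in E W v > k} \<le> b}"

primrec Vset :: "'a set \<Rightarrow> 'a set set \<Rightarrow> nat \<Rightarrow> nat \<Rightarrow> nat \<Rightarrow> 'a set" where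
  "Vset V E b k 0 = V"
| "Vset V E b k (Suc i) = Vset V E b k i - removed E b k (Vset V E b k i)"

definition layer_set :: "'a set \<Rightarrow> 'a set set \<Rightarrow> nat \<Rightarrow> nat \<Rightarrow> nat \<Rightarrow> 'a set" where
  "layer_set V E b k i = (if i = 0 then {} else removed E b k (Vset V E b k (i - 1)))"

definition layer :: "'a set \<Rightarrow> 'a set set \<Rightarrow> nat \<Rightarrow> nat \<Rightarrow> 'a \<Rightarrow> nat" where
  "layer V E b k u = (LEAST i. u \<in> layer_set V E b k i)"

definition lower :: "'a set \<Rightarrow> 'a set set \<Rightarrow> nat \<Rightarrow> nat \<Rightarrow> 'a::linorder \<Rightarrow> 'a \<Rightarrow> bool" where
  "lower V E b k u v \<longleftrightarrow> layer V E b k u < layer V E b k v \<or>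
      (layer V E b k u = layer V E b k v \<and> u < v)"

definition atypical :: "'a set \<Rightarrow> 'a set set \<Rightarrow> nat \<Rightarrow> nat \<Rightarrow> 'a set set" where
  "atypical V E b k = {e \<in> E. \<exists>u v. e = {u, v} \<and> layer V E b k u < layer V E b k v \<and>
      deg_in E (Vset V E b k (layer V E b k u - 1)) v > k}"

definition valid_col :: "'a::linorder set \<Rightarrow> 'a set set \<Rightarrow> nat \<Rightarrow> nat \<Rightarrow> nat \<Rightarrow> ('a set \<Rightarrow> nat) \<Rightarrow> bool" where
  "valid_col V E b k a col \<longleftrightarrow>
     (\<forall>e\<in>atypical V E b k. col e \<in> {1..2*a}) \<and>
     (\<forall>u. inj_on col {e \<in> atypical V E b k. \<exists>v. e = {u, v} \<and> lower V E b k u v})"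

definition adj_rel :: "'a set set \<Rightarrow> ('a \<times> 'a) set" where
  "adj_rel F = {(x, y). {x, y} \<in> F \<and> x \<noteq> y}"

definition components :: "'a set set \<Rightarrow> 'a set set" where
  "components F = {{w. (v, w) \<in> (adj_rel F)\<^sup>*} | v. v \<in> verts F}"

end

theory Submission
  imports Defs
begin


lemma path_cycle:
  assumes fin: "finite W"
    and deg2: "\<forall>x\<in>W. \<exists>y z. y \<noteq> z \<and> y \<in> W \<and> z \<in> W \<and> y \<noteq> x \<and> z \<noteq> x \<and> {x,y} \<in> F \<and> {x,z} \<in> F"
  shows "vs \<noteq> [] \<Longrightarrow> distinct vs \<Longrightarrow> set vs \<subseteq> W \<Longrightarrow> (\<forall>i. Suc i < length vs \<longrightarrow> {vs!i, vs!Suc i} \<in> F) \<Longrightarrow> \<not> forest F"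
proof (induction "card W - length vs" arbitrary: vs rule: less_induct)
  case less
  obtain v0 rest where vs: "vs = v0 # rest" using less.prems(1) by (cases vs) auto
  have v0W: "v0 \<in> W" using less.prems(3) vs by auto
  obtain y z where yz: "y \<noteq> z" "y \<in> W" "z \<in> W" "y \<noteq> v0" "z \<noteq> v0" "{v0,y} \<in> F" "{v0,z} \<in> F"
    using deg2 v0W by blast
  define x where "x = (if rest = [] then y else if y \<noteq> hd rest then y else z)"
  have x: "x \<noteq> v0" "x \<in> W" "{v0,x} \<in> F" "rest \<noteq> [] \<longrightarrow> x \<noteq> hd rest"
    using yz unfolding x_def by auto
  show ?case
  proof (cases "x \<in> set vs")
    case False
    define ws where "ws = x # vs"
    have d: "distinct ws" using False less.prems(2) ws_def by auto
    have s: "set ws \<subseteq> W" using x less.prems(3) ws_def by auto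
    have e: "\<forall>i. Suc i < length ws \<longrightarrow> {ws!i, ws!Suc i} \<in> F"
    proof (intro allI impI)
      fix i assume "Suc i < length ws"
      show "{ws!i, ws!Suc i} \<in> F"
      proof (cases i)
        case 0 then show ?thesis using x vs ws_def by (simp add: insert_commute)
      next
        case (Suc j) then show ?thesis using less.prems(4) \<open>Suc i < length ws\<close> ws_def by auto
      qed
    qed
    have "length ws \<le> card W" using d s fin by (metis card_mono distinct_card)
    then have "card W - length ws < card W - length vs" using ws_def by auto
    then show ?thesis using less.hyps[of ws] d s e ws_def by auto
  next
    case True
    then obtain j where j: "j < length vs" "vs ! j = x" by (metis in_set_conv_nth)
    have j0: "j \<noteq> 0" using j(2) x(1) vs by (cases j) auto
    have j1: "j \<noteq> 1" using j x(4) vs by (cases rest) auto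
    define cyc where "cyc = take (Suc j) vs"
    have lc: "length cyc = Suc j" using cyc_def j by auto
    have "\<forall>i<length cyc. {cyc ! i, cyc ! ((i + 1) mod length cyc)} \<in> F"
    proof (intro allI impI)
      fix i assume i: "i < length cyc"
      show "{cyc ! i, cyc ! ((i + 1) mod length cyc)} \<in> F"
      proof (cases "i = j")
        case True
        then have "(i + 1) mod length cyc = 0" using lc by simp
        moreover have "cyc ! i = x" using True j cyc_def by simp
        moreover have "cyc ! 0 = v0" using vs cyc_def by simp
        ultimately show ?thesis using x(3) by (simp add: insert_commute)
      next
        case False
        then have "i < j" using i lc by auto
        then have "(i + 1) mod length cyc = Suc i" using lc by simp
        then show ?thesis using \<open>i < j\<close> less.prems(4) j cyc_def by auto
      qed
    qed
    moreover have "distinct cyc" using less.prems(2) cyc_def by auto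
    moreover have "length cyc \<ge> 3" using lc j0 j1 by auto
    ultimately show ?thesis unfolding forest_def by blast
  qed
qed

lemma two_elems: "finite A \<Longrightarrow> card A \<ge> 2 \<Longrightarrow> \<exists>a b. a \<in> A \<and> b \<in> A \<and> a \<noteq> b"
  using card_le_Suc0_iff_eq by fastforce

lemma forest_bound:
  assumes "forest F" "finite W"
  shows "card {e\<in>F. e \<subseteq> W \<and> card e = 2} \<le> card W"
  using assms(2)
proof (induction "card W" arbitrary: W rule: less_induct)
  case less
  let ?Fw = "\<lambda>W. {e\<in>F. e \<subseteq> W \<and> card e = 2}"
  have finF: "finite (?Fw W)"
  proof (rule finite_subset)
    show "?Fw W \<subseteq> Pow W" by auto
  qed (use less.prems in simp)
  show ?case
  proof (cases "\<exists>x\<in>W. card {e \<in> ?Fw W. x \<in> e} \<le> 1")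
    case True
    then obtain x where x: "x \<in> W" "card {e \<in> ?Fw W. x \<in> e} \<le> 1" by blast
    have sub: "?Fw W \<subseteq> ?Fw (W - {x}) \<union> {e \<in> ?Fw W. x \<in> e}" by auto
    have f1: "finite (?Fw (W - {x}))" using finF by (rule finite_subset[rotated]) auto
    have "card (?Fw W) \<le> card (?Fw (W - {x})) + card {e \<in> ?Fw W. x \<in> e}"
    proof -
      have "card (?Fw W) \<le> card (?Fw (W - {x}) \<union> {e \<in> ?Fw W. x \<in> e})"
        by (rule card_mono) (use f1 finF sub in \<open>auto intro: finite_subset[OF _ finF]\<close>)
      also have "\<dots> \<le> card (?Fw (W - {x})) + card {e \<in> ?Fw W. x \<in> e}" by (rule card_Un_le)
      finally show ?thesis .
    qed
    moreover have "card (?Fw (W - {x})) \<le> card (W - {x})"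
      proof -
      have "card (W - {x}) < card W" using less.prems x(1) by (rule card_Diff1_less)
      moreover have "finite (W - {x})" using less.prems by simp
      ultimately show ?thesis using less.hyps[of "W - {x}"] by blast
    qed
    moreover have "card (W - {x}) = card W - 1" using x less.prems by simp
    moreover have "card W \<ge> 1" using x less.prems card_0_eq by fastforce
    ultimately show ?thesis using x by linarith
  next
    case False
    have "\<forall>x\<in>W. \<exists>y z. y \<noteq> z \<and> y \<in> W \<and> z \<in> W \<and> y \<noteq> x \<and> z \<noteq> x \<and> {x,y} \<in> F \<and> {x,z} \<in> F"
    proof
      fix x assume xW: "x \<in> W"
      have "card {e \<in> ?Fw W. x \<in> e} \<ge> 2" using False xW by auto
      moreover have "finite {e \<in> ?Fw W. x \<in> e}" using finF by (rule finite_subset[rotated]) auto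
      ultimately obtain e1 e2 where e: "e1 \<in> ?Fw W" "x \<in> e1" "e2 \<in> ?Fw W" "x \<in> e2" "e1 \<noteq> e2"
        using two_elems by blast
      obtain p1 q1 where pq1: "e1 = {p1,q1}" "p1 \<noteq> q1" using e(1) by (auto simp: card_2_iff)
      obtain p2 q2 where pq2: "e2 = {p2,q2}" "p2 \<noteq> q2" using e(3) by (auto simp: card_2_iff)
      obtain y where y: "e1 = {x,y}" "y \<noteq> x"
      proof (cases "x = p1")
        case True then show ?thesis using that pq1 by blast
      next
        case False then have "x = q1" using pq1 e(2) by auto
        then show ?thesis using that pq1 by (auto simp: insert_commute)
      qed
      obtain z where z: "e2 = {x,z}" "z \<noteq> x"
      proof (cases "x = p2")
        case True then show ?thesis using that pq2 by blast
      next
        case False then have "x = q2" using pq2 e(4) by auto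
        then show ?thesis using that pq2 by (auto simp: insert_commute)
      qed
      show "\<exists>y z. y \<noteq> z \<and> y \<in> W \<and> z \<in> W \<and> y \<noteq> x \<and> z \<noteq> x \<and> {x,y} \<in> F \<and> {x,z} \<in> F"
        using y z e by (intro exI[of _ y] exI[of _ z]) auto
    qed
    show ?thesis
    proof (cases "W = {}")
      case True then show ?thesis by simp
    next
      case False
      then obtain x where "x \<in> W" by auto
      then have "\<not> forest F"
        using path_cycle[OF less.prems \<open>\<forall>x\<in>W. _\<close>, of "[x]"] by auto
      then show ?thesis using assms(1) by simp
    qed
  qed
qed



lemma arb_bound:
  assumes "arboricity_le E a" "simple_graph V E" "finite W"
  shows "card {e\<in>E. e \<subseteq> W} \<le> a * card W"
proof -
  obtain Fs where Fs: "\<forall>i<a. forest (Fs i)" "E = (\<Union>i<a. Fs i)"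
    using assms(1) unfolding arboricity_le_def by blast
  have c2: "\<forall>e\<in>E. card e = 2"
  proof
    fix e assume "e \<in> E"
    then obtain u v where "e = {u,v}" "u \<noteq> v" using assms(2) unfolding simple_graph_def by blast
    then show "card e = 2" by simp
  qed
  have sub: "{e\<in>E. e \<subseteq> W} \<subseteq> (\<Union>i\<in>{..<a}. {e\<in>Fs i. e \<subseteq> W \<and> card e = 2})"
    using Fs(2) c2 by auto
  have fin: "finite (\<Union>i\<in>{..<a}. {e\<in>Fs i. e \<subseteq> W \<and> card e = 2})"
    by (rule finite_subset[of _ "Pow W"]) (use assms(3) in auto)
  have "card {e\<in>E. e \<subseteq> W} \<le> card (\<Union>i\<in>{..<a}. {e\<in>Fs i. e \<subseteq> W \<and> card e = 2})"
    by (rule card_mono[OF fin sub])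
  also have "\<dots> \<le> (\<Sum>i\<in>{..<a}. card {e\<in>Fs i. e \<subseteq> W \<and> card e = 2})"
    by (rule card_UN_le) simp
  also have "\<dots> \<le> (\<Sum>i\<in>{..<a}. card W)"
    by (rule sum_mono) (use forest_bound Fs(1) assms(3) in auto)
  finally show ?thesis by simp
qed

lemma removed_nonempty:
  fixes E :: "'a::linorder set set"
  assumes arb: "arboricity_le E a" and sg: "simple_graph V E" and WV: "W \<subseteq> V" and Wne: "W \<noteq> {}"
    and kk: "k \<ge> 2 * a"
  shows "removed E (2*a) k W \<noteq> {}"
proof
  assume rem: "removed E (2*a) k W = {}"
  have finW: "finite W" using sg WV unfolding simple_graph_def by (auto intro: finite_subset)
  let ?N = "\<lambda>x. {v\<in>W. {x,v} \<in> E}"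
  have deg: "\<forall>x\<in>W. card (?N x) \<ge> 2*a + 1"
  proof
    fix x assume xW: "x \<in> W"
    have "x \<notin> removed E (2*a) k W" using rem by auto
    then have "\<not> (deg_in E W x \<le> k \<and> card {v \<in> W. {x, v} \<in> E \<and> deg_in E W v > k} \<le> 2*a)"
      using xW unfolding removed_def by auto
    moreover have "card {v \<in> W. {x, v} \<in> E \<and> deg_in E W v > k} \<le> card (?N x)"
      by (rule card_mono) (use finW in auto)
    ultimately show "card (?N x) \<ge> 2*a + 1" using kk unfolding deg_in_def by linarith
  qed
  let ?P = "Sigma W ?N"
  have "card ?P = (\<Sum>x\<in>W. card (?N x))" by (rule card_SigmaI) (use finW in auto)
  also have "\<dots> \<ge> (\<Sum>x\<in>W. 2*a+1)" by (rule sum_mono) (use deg in auto)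
  finally have P1: "card ?P \<ge> (2*a+1) * card W" by (simp add: mult.commute)
  let ?Ew = "{e\<in>E. e \<subseteq> W}"
  define g where "g = (\<lambda>(e::'a set, b::bool). if b then (Min e, Max e) else (Max e, Min e))"
  have finEw: "finite ?Ew" by (rule finite_subset[of _ "Pow W"]) (use finW in auto)
  have "?P \<subseteq> g ` (?Ew \<times> UNIV)"
  proof
    fix p assume "p \<in> ?P"
    then obtain x v where p: "p = (x,v)" "x \<in> W" "v \<in> W" "{x,v} \<in> E" by auto
    have "x \<noteq> v" using p(4) sg unfolding simple_graph_def by (metis doubleton_eq_iff insert_absorb2)
    show "p \<in> g ` (?Ew \<times> UNIV)"
    proof (cases "x < v")
      case True
      then have "g ({x,v}, True) = (x,v)" unfolding g_def by (auto simp: min_def max_def)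
      then show ?thesis using p by (metis (no_types, lifting) SigmaI UNIV_I empty_subsetI image_eqI insert_subset mem_Collect_eq)
    next
      case False
      then have "v < x" using \<open>x \<noteq> v\<close> by auto
      then have "g ({x,v}, False) = (x,v)" unfolding g_def by (auto simp: min_def max_def)
      then show ?thesis using p by (metis (no_types, lifting) SigmaI UNIV_I empty_subsetI image_eqI insert_subset mem_Collect_eq)
    qed
  qed
  then have "card ?P \<le> card (g ` (?Ew \<times> UNIV))" by (rule card_mono[rotated]) (use finEw in simp)
  also have "\<dots> \<le> card (?Ew \<times> (UNIV::bool set))" by (rule card_image_le) (use finEw in simp)
  also have "\<dots> = 2 * card ?Ew" by (simp add: card_cartesian_product)
  also have "\<dots> \<le> 2 * (a * card W)" using arb_bound[OF arb sg finW] by simp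
  finally have "(2*a+1) * card W \<le> 2 * a * card W" using P1 by simp
  then have "card W = 0" by simp
  then show False using finW Wne by simp
qed



lemma lower_irrefl: "\<not> lower V E b k x x" unfolding lower_def by auto
lemma lower_asym: "lower V E b k x y \<Longrightarrow> \<not> lower V E b k y x" unfolding lower_def by auto
lemma lower_trans: "lower V E b k x y \<Longrightarrow> lower V E b k y z \<Longrightarrow> lower V E b k x z"
  unfolding lower_def by auto
lemma lower_total: "x \<noteq> y \<Longrightarrow> lower V E b k x y \<or> lower V E b k y x"
  unfolding lower_def by auto

lemma lower_pair_eq:
  assumes "{u,v} = {u',v'}" "lower V E b k u v" "lower V E b k u' v'"
  shows "u = u' \<and> v = v'"
  using assms lower_asym by (metis doubleton_eq_iff)

lemma Vset_Suc_sub: "Vset V E b k (Suc i) \<subseteq> Vset V E b k i" by auto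

lemma Vset_mono: "i \<le> j \<Longrightarrow> Vset V E b k j \<subseteq> Vset V E b k i"
  by (rule lift_Suc_antimono_le[of "Vset V E b k", OF Vset_Suc_sub])

lemma Vset_sub: "Vset V E b k i \<subseteq> V"
  using Vset_mono[of 0 i V E b k] by simp

lemma removed_sub: "removed E b k W \<subseteq> W" unfolding removed_def by auto

lemma Vset_card:
  fixes E :: "'a::linorder set set"
  assumes arb: "arboricity_le E a" and sg: "simple_graph V E" and kk: "k \<ge> 2 * a"
  shows "card (Vset V E (2*a) k i) \<le> card V - i"
proof (induction i)
  case 0 then show ?case by simp
next
  case (Suc i)
  have finV: "finite V" using sg unfolding simple_graph_def by auto
  show ?case
  proof (cases "Vset V E (2*a) k i = {}")
    case True then show ?thesis by simp
  next
    case False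
    have ne: "removed E (2*a) k (Vset V E (2*a) k i) \<noteq> {}"
      by (rule removed_nonempty[OF arb sg Vset_sub False kk])
    have fin: "finite (Vset V E (2*a) k i)" by (rule finite_subset[OF Vset_sub finV])
    have "Vset V E (2*a) k (Suc i) \<subset> Vset V E (2*a) k i"
      using ne removed_sub by fastforce
    then have "card (Vset V E (2*a) k (Suc i)) < card (Vset V E (2*a) k i)"
      using fin by (rule psubset_card_mono[rotated])
    then show ?thesis using Suc.IH by linarith
  qed
qed

lemma in_some_layer:
  fixes E :: "'a::linorder set set"
  assumes arb: "arboricity_le E a" and sg: "simple_graph V E" and kk: "k \<ge> 2 * a" and uV: "u \<in> V"
  shows "layer V E (2*a) k u \<ge> 1 \<and> u \<in> removed E (2*a) k (Vset V E (2*a) k (layer V E (2*a) k u - 1))"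
proof -
  have finV: "finite V" using sg unfolding simple_graph_def by auto
  have "card (Vset V E (2*a) k (card V)) = 0" using Vset_card[OF arb sg kk, of "card V"] by (simp only: diff_self_eq_0 le_zero_eq)
  moreover have "finite (Vset V E (2*a) k (card V))" by (rule finite_subset[OF Vset_sub finV])
  ultimately have emp: "Vset V E (2*a) k (card V) = {}" using card_0_eq by blast
  have "\<And>n. u \<notin> Vset V E (2*a) k n \<Longrightarrow> \<exists>i<n. u \<in> Vset V E (2*a) k i \<and> u \<notin> Vset V E (2*a) k (Suc i)"
  proof -
    fix n show "u \<notin> Vset V E (2*a) k n \<Longrightarrow> \<exists>i<n. u \<in> Vset V E (2*a) k i \<and> u \<notin> Vset V E (2*a) k (Suc i)"
    proof (induction n)
      case 0 then show ?case using uV by simp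
    next
      case (Suc n)
      show ?case
      proof (cases "u \<in> Vset V E (2*a) k n")
        case True then show ?thesis using Suc.prems by (intro exI[of _ n]) simp
      next
        case False
        then obtain i where "i < n" "u \<in> Vset V E (2*a) k i \<and> u \<notin> Vset V E (2*a) k (Suc i)"
          using Suc.IH by blast
        then show ?thesis by (intro exI[of _ i]) simp
      qed
    qed
  qed
  then obtain i where i: "u \<in> Vset V E (2*a) k i" "u \<notin> Vset V E (2*a) k (Suc i)" using emp by blast
  then have "u \<in> layer_set V E (2*a) k (Suc i)" unfolding layer_set_def by simp
  then have L: "u \<in> layer_set V E (2*a) k (layer V E (2*a) k u)"
    unfolding layer_def by (rule LeastI)
  then have "layer V E (2*a) k u \<noteq> 0" unfolding layer_set_def by (auto split: if_splits)
  then show ?thesis using L unfolding layer_set_def by auto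
qed

lemma in_Vset_below:
  fixes E :: "'a::linorder set set"
  assumes arb: "arboricity_le E a" and sg: "simple_graph V E" and kk: "k \<ge> 2 * a" and vV: "v \<in> V"
    and lt: "i < layer V E (2*a) k v"
  shows "v \<in> Vset V E (2*a) k i"
proof -
  have "v \<in> Vset V E (2*a) k (layer V E (2*a) k v - 1)"
    using in_some_layer[OF arb sg kk vV] subsetD[OF removed_sub] by auto
  moreover have "Vset V E (2*a) k (layer V E (2*a) k v - 1) \<subseteq> Vset V E (2*a) k i"
    by (rule Vset_mono) (use lt in auto)
  ultimately show ?thesis by blast
qed



locale decomp =
  fixes V :: "'a::linorder set" and E :: "'a set set" and a k :: nat
  assumes sg: "simple_graph V E" and arb: "arboricity_le E a" and kk: "k \<ge> 2 * a"
begin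

abbreviation "lw \<equiv> lower V E (2*a) k"
abbreviation "lay \<equiv> layer V E (2*a) k"
abbreviation "VS \<equiv> Vset V E (2*a) k"
abbreviation "AT \<equiv> atypical V E (2*a) k"

lemma finV: "finite V" using sg unfolding simple_graph_def by auto

lemma at_struct:
  assumes "e \<in> AT"
  shows "\<exists>u v. e = {u,v} \<and> lw u v \<and> {u,v} \<in> E \<and> u \<in> V \<and> v \<in> V \<and> v \<in> VS (lay u - 1) \<and>
     deg_in E (VS (lay u - 1)) v > k"
proof -
  obtain u v where uv: "e \<in> E" "e = {u,v}" "lay u < lay v" "deg_in E (VS (lay u - 1)) v > k"
    using assms unfolding atypical_def by blast
  obtain p q where pq: "e = {p,q}" "p \<noteq> q" "p \<in> V" "q \<in> V" using sg uv(1) unfolding simple_graph_def by blast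
  have V: "u \<in> V" "v \<in> V" using pq uv(2) by (auto simp: doubleton_eq_iff)
  have "lw u v" using uv(3) unfolding lower_def by simp
  moreover have "v \<in> VS (lay u - 1)" by (rule in_Vset_below[OF arb sg kk V(2)]) (use uv(3) in auto)
  ultimately show ?thesis using uv V by blast
qed

definition S where "S u = {e \<in> AT. \<exists>v. e = {u,v} \<and> lw u v}"

lemma S_card: "finite (S u) \<and> card (S u) \<le> 2 * a"
proof (cases "u \<in> V")
  case False
  have "S u = {}"
  proof (rule ccontr)
    assume "S u \<noteq> {}"
    then obtain e v where e: "e \<in> AT" "e = {u,v}" "lw u v" unfolding S_def by blast
    obtain u' v' where "e = {u',v'}" "lw u' v'" "u' \<in> V" "v' \<in> V" using at_struct[OF e(1)] by blast
    then show False using e False lower_pair_eq by metis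
  qed
  then show ?thesis by simp
next
  case True
  let ?W = "VS (lay u - 1)"
  let ?H = "{v \<in> ?W. {u, v} \<in> E \<and> deg_in E ?W v > k}"
  have "u \<in> removed E (2*a) k ?W" using in_some_layer[OF arb sg kk True] by blast
  then have cH: "card ?H \<le> 2 * a" unfolding removed_def by blast
  have finH: "finite ?H" using finite_subset[OF Vset_sub finV] by simp
  have sub: "S u \<subseteq> (\<lambda>v. {u,v}) ` ?H"
  proof
    fix e assume "e \<in> S u"
    then obtain v where e: "e \<in> AT" "e = {u,v}" "lw u v" unfolding S_def by blast
    obtain u' v' where s: "e = {u',v'}" "lw u' v'" "{u',v'} \<in> E" "v' \<in> VS (lay u' - 1)"
      "deg_in E (VS (lay u' - 1)) v' > k" using at_struct[OF e(1)] by blast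
    have "u = u' \<and> v = v'" using lower_pair_eq[of u v u' v'] e s by simp
    then show "e \<in> (\<lambda>v. {u,v}) ` ?H" using s e by blast
  qed
  have "finite (S u)" by (rule finite_subset[OF sub finite_imageI[OF finH]])
  moreover have "card (S u) \<le> card ((\<lambda>v. {u,v}) ` ?H)" by (rule card_mono[OF finite_imageI[OF finH] sub])
  moreover have "card ((\<lambda>v. {u,v}) ` ?H) \<le> card ?H" by (rule card_image_le[OF finH])
  ultimately show ?thesis using cH by linarith
qed

lemma S_unique: assumes "e \<in> S u" "e \<in> S w" shows "u = w"
proof -
  obtain v where v: "e = {u,v}" "lw u v" using assms(1) unfolding S_def by blast
  obtain v' where v': "e = {w,v'}" "lw w v'" using assms(2) unfolding S_def by blast
  show ?thesis using lower_pair_eq[of u v w v'] v v' by simp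
qed

lemma AT_in_S: assumes "e \<in> AT" shows "\<exists>u. e \<in> S u"
proof -
  obtain u v where "e = {u,v}" "lw u v" using at_struct[OF assms] by blast
  then have "e \<in> S u" using assms unfolding S_def by blast
  then show ?thesis by blast
qed

lemma col_exists: "\<exists>col. valid_col V E (2*a) k a col"
proof -
  have "\<forall>u. \<exists>f. f ` S u \<subseteq> {1..2*a} \<and> inj_on f (S u)"
  proof
    fix u show "\<exists>f. f ` S u \<subseteq> {1..2*a} \<and> inj_on f (S u)"
      using card_le_inj[of "S u" "{1..2*a}"] S_card[of u] by simp
  qed
  then have "\<exists>f. \<forall>u. f u ` S u \<subseteq> {1..2*a} \<and> inj_on (f u) (S u)" by (rule choice)
  then obtain f where f0: "\<forall>u. f u ` S u \<subseteq> {1..2*a} \<and> inj_on (f u) (S u)" by blast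
  have f: "f u ` S u \<subseteq> {1..2*a}" "inj_on (f u) (S u)" for u using f0 by auto
  define col where "col e = f (SOME u. e \<in> S u) e" for e
  have colS: "col e = f u e" if "e \<in> S u" for e u
  proof -
    have "e \<in> S (SOME u. e \<in> S u)" using that by (rule someI)
    then have "(SOME u. e \<in> S u) = u" using that by (rule S_unique)
    then show ?thesis unfolding col_def by simp
  qed
  have "valid_col V E (2*a) k a col"
    unfolding valid_col_def
  proof (intro conjI ballI allI)
    fix e assume "e \<in> AT"
    then obtain u where "e \<in> S u" using AT_in_S by blast
    then show "col e \<in> {1..2*a}" using colS[of e u] f(1)[of u] by auto
  next
    fix u
    have "inj_on col (S u) = inj_on (f u) (S u)" by (rule inj_on_cong) (rule colS)
    then have "inj_on col (S u)" using f(2) by simp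
    then show "inj_on col {e \<in> AT. \<exists>v. e = {u, v} \<and> lw u v}" unfolding S_def .
  qed
  then show ?thesis by blast
qed


lemma uniq:
  assumes vc: "valid_col V E (2*a) k a col"
    and "{u,v} \<in> AT" "col {u,v} = i" "lw u v" "{u,w} \<in> AT" "col {u,w} = i" "lw u w"
  shows "v = w"
proof -
  have inj: "inj_on col (S u)" using vc unfolding valid_col_def S_def by blast
  have "{u,v} \<in> S u" "{u,w} \<in> S u" using assms unfolding S_def by blast+
  then have "{u,v} = {u,w}" using inj_onD[OF inj] assms(3,6) by metis
  moreover have "u \<noteq> v" using assms(4) lower_irrefl by metis
  ultimately show ?thesis by (auto simp: doubleton_eq_iff)
qed

lemma min_exists:
  assumes "finite X" "X \<noteq> {}"
  shows "\<exists>m\<in>X. \<forall>x\<in>X. x \<noteq> m \<longrightarrow> lw m x"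
  using assms
proof (induction X rule: finite_ne_induct)
  case (singleton x) then show ?case by simp
next
  case (insert x X)
  then obtain m where m: "m \<in> X" "\<forall>y\<in>X. y \<noteq> m \<longrightarrow> lw m y" by blast
  show ?case
  proof (cases "lw x m")
    case True
    have "\<forall>y\<in>insert x X. y \<noteq> x \<longrightarrow> lw x y"
    proof (intro ballI impI)
      fix y assume "y \<in> insert x X" "y \<noteq> x"
      then have "y \<in> X" by simp
      then show "lw x y" using m True lower_trans by metis
    qed
    then show ?thesis by blast
  next
    case False
    have "x \<noteq> m" using insert.hyps m by blast
    then have "lw m x" using False lower_total by metis
    then show ?thesis using m by blast
  qed
qed

lemma forest_F:
  assumes vc: "valid_col V E (2*a) k a col"
  shows "forest {e \<in> AT. col e = i}"
  unfolding forest_def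
proof
  let ?F = "{e \<in> AT. col e = i}"
  assume "\<exists>vs. 3 \<le> length vs \<and> distinct vs \<and> (\<forall>j<length vs. {vs ! j, vs ! ((j + 1) mod length vs)} \<in> ?F)"
  then obtain vs where vs: "3 \<le> length vs" "distinct vs" "\<forall>j<length vs. {vs ! j, vs ! ((j + 1) mod length vs)} \<in> ?F"
    by blast
  define n where "n = length vs"
  obtain m where m: "m \<in> set vs" "\<forall>x\<in>set vs. x \<noteq> m \<longrightarrow> lw m x"
    using min_exists[of "set vs"] vs(1) by fastforce
  obtain p where p: "p < n" "vs ! p = m" using m(1) n_def by (metis in_set_conv_nth)
  define q1 where "q1 = (if p = n - 1 then 0 else p + 1)"
  define q2 where "q2 = (if p = 0 then n - 1 else p - 1)"
  have n3: "n \<ge> 3" using vs(1) n_def by simp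
  then have sn: "Suc (n - 1) = n" by simp
  have q1n: "q1 < n" "(p + 1) mod n = q1" using p n3 sn unfolding q1_def by auto
  have q2n: "q2 < n" "(q2 + 1) mod n = p" using p n3 sn unfolding q2_def by auto
  have neq: "q1 \<noteq> p" "q2 \<noteq> p" "q1 \<noteq> q2" using p vs(1) n_def unfolding q1_def q2_def by auto
  have e1: "{m, vs ! q1} \<in> ?F" using vs(3) p q1n n_def by metis
  have e2: "{m, vs ! q2} \<in> ?F" using vs(3)[rule_format, of q2] q2n p n_def by (simp add: insert_commute)
  have ln: "q1 < length vs" "q2 < length vs" "p < length vs" using q1n q2n p n_def by auto
  have "vs ! q1 \<noteq> vs ! p" using nth_eq_iff_index_eq[OF vs(2) ln(1) ln(3)] neq(1) by blast
  moreover have "vs ! q2 \<noteq> vs ! p" using nth_eq_iff_index_eq[OF vs(2) ln(2) ln(3)] neq(2) by blast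
  moreover have "vs ! q1 \<noteq> vs ! q2" using nth_eq_iff_index_eq[OF vs(2) ln(1) ln(2)] neq(3) by blast
  ultimately have d: "vs ! q1 \<noteq> m" "vs ! q2 \<noteq> m" "vs ! q1 \<noteq> vs ! q2" using p(2) by auto
  have l: "lw m (vs ! q1)" "lw m (vs ! q2)" using m(2) d ln nth_mem by blast+
  have "vs ! q1 = vs ! q2" using uniq[OF vc, of m "vs ! q1" i "vs ! q2"] e1 e2 l by auto
  then show False using d by simp
qed

lemma higher_card:
  assumes vc: "valid_col V E (2*a) k a col"
  shows "card {v. {u, v} \<in> {e \<in> AT. col e = i} \<and> lw u v} \<le> 1"
proof -
  let ?A = "{v. {u, v} \<in> {e \<in> AT. col e = i} \<and> lw u v}"
  have all: "\<forall>x\<in>?A. \<forall>y\<in>?A. x = y" using uniq[OF vc] by auto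
  show ?thesis
  proof (cases "\<exists>x. x \<in> ?A")
    case False
    then have "?A = {}" by blast
    then show ?thesis by (metis card.empty zero_le)
  next
    case True
    then obtain x where "x \<in> ?A" by blast
    then have "?A = {x}" using all by blast
    then show ?thesis by (metis card.empty card_insert_disjoint empty_iff finite.emptyI le_refl One_nat_def)
  qed
qed


lemma star_part:
  assumes vc: "valid_col V E (2*a) k a col"
    and Fdef: "F = {e \<in> AT. col e = i}"
    and proper: "\<forall>x y. {x, y} \<in> F \<and> x \<noteq> y \<longrightarrow> c x \<noteq> c y"
    and Fjdef: "Fj = {e \<in> F. \<exists>x y. e = {x, y} \<and> lw x y \<and> c y = j}"
    and SC: "Cm \<in> components Fj"
  shows "\<exists>z\<in>Cm. (\<forall>w\<in>Cm. w \<noteq> z \<longrightarrow> lw w z) \<and> (\<forall>e\<in>Fj. e \<subseteq> Cm \<longrightarrow> z \<in> e)"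
proof -
  have un: "v = w" if "{u,v} \<in> Fj" "lw u v" "{u,w} \<in> Fj" "lw u w" for u v w
    using uniq[OF vc, of u v i w] that Fdef Fjdef by auto
  have Fj_mem: "e \<in> F \<and> (\<exists>x y. e = {x,y} \<and> lw x y \<and> c y = j)" if "e \<in> Fj" for e
    using that unfolding Fjdef by (rule CollectD)
  have Fj_lw: "\<exists>x y. e = {x,y} \<and> lw x y" if "e \<in> Fj" for e using Fj_mem[OF that] by blast
  have C1: "c y = j" if h: "{x,y} \<in> Fj" "lw x y" for x y
  proof -
    obtain x' y' where "{x,y} = {x',y'}" "lw x' y'" "c y' = j" using Fj_mem[OF h(1)] by blast
    then show ?thesis using lower_pair_eq[of x y x' y' V E "2*a" k] h(2) by simp
  qed
  have C2: "c x \<noteq> j" if "{x,y} \<in> Fj" "lw x y" for x y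
  proof -
    have "x \<noteq> y" using that(2) lower_irrefl by metis
    moreover have "{x,y} \<in> F" using Fj_mem[OF that(1)] by blast
    ultimately have "c x \<noteq> c y" using proper by blast
    then show ?thesis using C1[OF that] by simp
  qed
  obtain v where Sdef: "Cm = {w. (v, w) \<in> (adj_rel Fj)\<^sup>*}" "v \<in> verts Fj"
    using SC unfolding components_def by blast
  obtain e0 where "e0 \<in> Fj" "v \<in> e0" using Sdef(2) unfolding verts_def by blast
  then obtain x z where xz: "{x,z} \<in> Fj" "lw x z" "v = x \<or> v = z" using Fj_lw by blast
  define St where "St = {z} \<union> {w. {w,z} \<in> Fj \<and> lw w z}"
  have vSt: "v \<in> St" using xz unfolding St_def by blast
  have cz: "c z = j" using C1[OF xz(1,2)] .
  have closed: "w' \<in> St" if "w \<in> St" "(w,w') \<in> adj_rel Fj" for w w'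
  proof -
    have ww: "{w,w'} \<in> Fj" "w \<noteq> w'" using that(2) unfolding adj_rel_def by auto
    obtain p q where pq: "{w,w'} = {p,q}" "lw p q" using Fj_lw[OF ww(1)] by blast
    show ?thesis
    proof (cases "w = z")
      case True
      show ?thesis
      proof (cases "p = w")
        case True
        then have "q = w'" using pq ww(2) by (auto simp: doubleton_eq_iff)
        then have "c z \<noteq> j" using C2[of z w'] pq ww \<open>w = z\<close> True by simp
        then show ?thesis using cz by simp
      next
        case False
        then have "p = w'" "q = w" using pq by (auto simp: doubleton_eq_iff)
        then show ?thesis using pq ww \<open>w = z\<close> unfolding St_def by (auto simp: insert_commute)
      qed
    next
      case False
      then have wz: "{w,z} \<in> Fj" "lw w z" using that(1) unfolding St_def by auto
      show ?thesis
      proof (cases "p = w")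
        case True
        then have "q = w'" using pq ww(2) by (auto simp: doubleton_eq_iff)
        then have "w' = z" using un[OF _ _ wz] pq ww True by simp
        then show ?thesis unfolding St_def by simp
      next
        case False
        then have "p = w'" "q = w" using pq by (auto simp: doubleton_eq_iff)
        then have "c w = j" using C1[of w' w] pq ww by (simp add: insert_commute)
        then show ?thesis using C2[OF wz] by simp
      qed
    qed
  qed
  have CmSt: "Cm \<subseteq> St"
  proof
    fix w assume "w \<in> Cm"
    then have "(v, w) \<in> (adj_rel Fj)\<^sup>*" using Sdef by simp
    then show "w \<in> St"
    proof (induction rule: rtrancl_induct)
      case base then show ?case by (rule vSt)
    next
      case (step y w) then show ?case using closed by blast
    qed
  qed
  have zS: "z \<in> Cm"
  proof (cases "v = z")
    case True then show ?thesis using Sdef by simp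
  next
    case False
    then have "v = x" using xz by blast
    moreover have "x \<noteq> z" using xz(2) lower_irrefl by metis
    ultimately have "(v, z) \<in> adj_rel Fj" using xz(1) unfolding adj_rel_def by simp
    then show ?thesis using Sdef by simp
  qed
  have P1: "\<forall>w\<in>Cm. w \<noteq> z \<longrightarrow> lw w z" using CmSt unfolding St_def by blast
  have P2: "\<forall>e\<in>Fj. e \<subseteq> Cm \<longrightarrow> z \<in> e"
  proof (intro ballI impI)
    fix e assume e: "e \<in> Fj" "e \<subseteq> Cm"
    obtain p q where pq: "e = {p,q}" "lw p q" using Fj_lw[OF e(1)] by blast
    show "z \<in> e"
    proof (rule ccontr)
      assume "z \<notin> e"
      then have "p \<noteq> z" "q \<noteq> z" using pq by auto
      then have "{p,z} \<in> Fj" "lw p z" using e(2) CmSt pq unfolding St_def by auto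
      then have "q = z" using un[of p q z] pq e(1) by simp
      then show False using \<open>q \<noteq> z\<close> by simp
    qed
  qed
  show ?thesis using zS P1 P2 by blast
qed
end


theorem mainTheorem8:
  fixes V :: "'a::linorder set" and E :: "'a set set" and n a k :: nat
  assumes "simple_graph V E" and "card V = n"
    and "a \<ge> 1" and "arboricity_le E a" and "k \<ge> 5 * a"
  shows "(\<exists>col. valid_col V E (2*a) k a col) \<and>
    (\<forall>col. valid_col V E (2*a) k a col \<longrightarrow>
      (\<forall>i\<in>{1..2*a}.
        let F = {e \<in> atypical V E (2*a) k. col e = i} in
        forest F \<and>
        (\<forall>u\<in>verts F. card {v. {u, v} \<in> F \<and> lower V E (2*a) k u v} \<le> 1) \<and>
        (\<forall>c :: 'a \<Rightarrow> nat.
           (\<forall>v\<in>verts F. c v \<in> {1, 2, 3}) \<and> (\<forall>x y. {x, y} \<in> F \<and> x \<noteq> y \<longrightarrow> c x \<noteq> c y) \<longrightarrow>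
           (\<forall>j\<in>{1, 2, 3}.
              let Fj = {e \<in> F. \<exists>x y. e = {x, y} \<and> lower V E (2*a) k x y \<and> c y = j} in
              \<forall>S\<in>components Fj. \<exists>z\<in>S.
                 (\<forall>w\<in>S. w \<noteq> z \<longrightarrow> lower V E (2*a) k w z) \<and>
                 (\<forall>e\<in>Fj. e \<subseteq> S \<longrightarrow> z \<in> e)))))"
proof -
  have kk: "k \<ge> 2 * a" using assms(5) by linarith
  interpret decomp V E a k by unfold_locales (rule assms(1), rule assms(4), rule kk)
  show ?thesis
  proof (intro conjI allI impI ballI)
    show "\<exists>col. valid_col V E (2*a) k a col" by (rule col_exists)
  next
    fix col i assume vc: "valid_col V E (2*a) k a col" and "i \<in> {1..2*a}"
    define F where "F = {e \<in> atypical V E (2*a) k. col e = i}"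
    have "forest F" unfolding F_def by (rule forest_F[OF vc])
    moreover have "\<forall>u\<in>verts F. card {v. {u, v} \<in> F \<and> lower V E (2*a) k u v} \<le> 1"
      unfolding F_def using higher_card[OF vc] by blast
    moreover have "\<forall>c :: 'a \<Rightarrow> nat.
           (\<forall>v\<in>verts F. c v \<in> {1, 2, 3}) \<and> (\<forall>x y. {x, y} \<in> F \<and> x \<noteq> y \<longrightarrow> c x \<noteq> c y) \<longrightarrow>
           (\<forall>j\<in>{1, 2, 3}.
              let Fj = {e \<in> F. \<exists>x y. e = {x, y} \<and> lower V E (2*a) k x y \<and> c y = j} in
              \<forall>S\<in>components Fj. \<exists>z\<in>S.
                 (\<forall>w\<in>S. w \<noteq> z \<longrightarrow> lower V E (2*a) k w z) \<and>
                 (\<forall>e\<in>Fj. e \<subseteq> S \<longrightarrow> z \<in> e))"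
    proof (intro allI impI ballI)
      fix c :: "'a \<Rightarrow> nat" and j :: nat
      assume hc: "(\<forall>v\<in>verts F. c v \<in> {1, 2, 3}) \<and> (\<forall>x y. {x, y} \<in> F \<and> x \<noteq> y \<longrightarrow> c x \<noteq> c y)"
      define Fj where "Fj = {e \<in> F. \<exists>x y. e = {x, y} \<and> lower V E (2*a) k x y \<and> c y = j}"
      have "\<forall>S\<in>components Fj. \<exists>z\<in>S.
                 (\<forall>w\<in>S. w \<noteq> z \<longrightarrow> lower V E (2*a) k w z) \<and>
                 (\<forall>e\<in>Fj. e \<subseteq> S \<longrightarrow> z \<in> e)"
      proof
        fix S assume "S \<in> components Fj"
        then show "\<exists>z\<in>S. (\<forall>w\<in>S. w \<noteq> z \<longrightarrow> lower V E (2*a) k w z) \<and> (\<forall>e\<in>Fj. e \<subseteq> S \<longrightarrow> z \<in> e)"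
          by (rule star_part[OF vc F_def conjunct2[OF hc] Fj_def])
      qed
      then show "let Fj = {e \<in> F. \<exists>x y. e = {x, y} \<and> lower V E (2*a) k x y \<and> c y = j} in
              \<forall>S\<in>components Fj. \<exists>z\<in>S.
                 (\<forall>w\<in>S. w \<noteq> z \<longrightarrow> lower V E (2*a) k w z) \<and>
                 (\<forall>e\<in>Fj. e \<subseteq> S \<longrightarrow> z \<in> e)" unfolding Let_def Fj_def .
    qed
    ultimately have all: "forest F \<and>
        (\<forall>u\<in>verts F. card {v. {u, v} \<in> F \<and> lower V E (2*a) k u v} \<le> 1) \<and>
        (\<forall>c :: 'a \<Rightarrow> nat.
           (\<forall>v\<in>verts F. c v \<in> {1, 2, 3}) \<and> (\<forall>x y. {x, y} \<in> F \<and> x \<noteq> y \<longrightarrow> c x \<noteq> c y) \<longrightarrow>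
           (\<forall>j\<in>{1, 2, 3}.
              let Fj = {e \<in> F. \<exists>x y. e = {x, y} \<and> lower V E (2*a) k x y \<and> c y = j} in
              \<forall>S\<in>components Fj. \<exists>z\<in>S.
                 (\<forall>w\<in>S. w \<noteq> z \<longrightarrow> lower V E (2*a) k w z) \<and>
                 (\<forall>e\<in>Fj. e \<subseteq> S \<longrightarrow> z \<in> e)))" by (intro conjI)
    show "let F = {e \<in> atypical V E (2*a) k. col e = i} in
        forest F \<and>
        (\<forall>u\<in>verts F. card {v. {u, v} \<in> F \<and> lower V E (2*a) k u v} \<le> 1) \<and>
        (\<forall>c :: 'a \<Rightarrow> nat.
           (\<forall>v\<in>verts F. c v \<in> {1, 2, 3}) \<and> (\<forall>x y. {x, y} \<in> F \<and> x \<noteq> y \<longrightarrow> c x \<noteq> c y) \<longrightarrow>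
           (\<forall>j\<in>{1, 2, 3}.
              let Fj = {e \<in> F. \<exists>x y. e = {x, y} \<and> lower V E (2*a) k x y \<and> c y = j} in
              \<forall>S\<in>components Fj. \<exists>z\<in>S.
                 (\<forall>w\<in>S. w \<noteq> z \<longrightarrow> lower V E (2*a) k w z) \<and>
                 (\<forall>e\<in>Fj. e \<subseteq> S \<longrightarrow> z \<in> e)))"
      unfolding Let_def using all unfolding F_def Let_def .
  qed
qed
end
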